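(* In a hierarchical tensor factorization with mode tree $\mathcal T$, for any $\nu\in\mathrm{int}(\mathcal T)$: $$\|\mathcal W^{(\nu,:)}\|\le\|W^{(\nu)}\|\cdot\prod_{\nu_c\in C(\nu)}\|\mathcal W^{(\nu_c,:)}\|.$$
   Context: Fix $N\in\mathbb N$, $D_1,\dots,D_N\in\mathbb N$; $[K]:=\{1,\dots,K\}$; norms are Frobenius norms; $\otimes$ the tensor product. A mode tree $\mathcal T$ over $[N]$ is a rooted tree whose nodes are labeled by subsets of $[N]$, with exactly $N$ leaves labeled $\{1\},\dots,\{N\}$, and where each interior node's label is the union of its children's labels; nodes are identified with labels, root $[N]$, $\mathrm{int}(\mathcal T)$ interior nodes, $Pa(\nu)$ parent, $C(\nu)$ children (fixed order). A hierarchical tensor factorization has $R_\nu\in\mathbb N$ ($\nu\in\mathrm{int}(\mathcal T)$), $R_{Pa([N])}:=1$, $R_{\{n\}}:=D_n$, weight matrices $W^{(\nu)}\in\mathbb R^{R_\nu\times R_{Pa(\nu)}}$. Intermediate tensors: $\mathcal W^{(\{n\},r)}:=W^{(\{n\})}_{:,r}$; for $\nu\in\mathrm{int}(\mathcal T)\setminus\{[N]\}$ (leaves to root), $r\in[R_{Pa(\nu)}]$: $\mathcal W^{(\nu,r)}:=\pi_\nu\big(\sum_{r'=1}^{R_\nu}W^{(\nu)}_{r',r}\bigotimes_{\nu_c\in C(\nu)}\mathcal W^{(\nu_c,r')}\big)$; end tensor $\mathcal W_H:=\pi_{[N]}\big(\sum_{r'=1}^{R_{[N]}}W^{([N])}_{r',1}\bigotimes_{\nu_c\in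 C([N])}\mathcal W^{(\nu_c,r')}\big)$, where $\pi_\nu$ permutes modes (ordered by children, each child's elements ascending) into ascending order of the elements of $\nu$; by convention $\mathcal W^{([N],1)}:=\mathcal W_H$. For $\nu\in\mathcal T$, $\mathcal W^{(\nu,:)}$ is the tensor obtained by stacking $(\mathcal W^{(\nu,r)})_{r=1}^{R_{Pa(\nu)}}$ along an additional last mode, i.e. $\mathcal W^{(\nu,:)}_{:,\dots,:,r}=\mathcal W^{(\nu,r)}$. *)

theory Defs
  imports "HOL-Analysis.Analysis"
begin

datatype mtree = Leaf nat | Node "mtree list"

fun label :: "mtree \<Rightarrow> nat set" where
  "label (Leaf n) = {n}"
| "label (Node cs) = (\<Union>c\<in>set cs. label c)"

fun subtrees :: "mtree \<Rightarrow> mtree list" where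
  "subtrees (Leaf n) = [Leaf n]"
| "subtrees (Node cs) = Node cs # concat (map subtrees cs)"

fun leaves :: "mtree \<Rightarrow> nat list" where
  "leaves (Leaf n) = [n]"
| "leaves (Node cs) = concat (map leaves cs)"

text \<open>A mode tree over [N]: exactly N leaves labelled {1},...,{N}, root label [N],
  no childless interior node, and distinct labels (nodes are identified with labels).\<close>
definition mode_tree :: "nat \<Rightarrow> mtree \<Rightarrow> bool" where
  "mode_tree N T \<longleftrightarrow>
     mset (leaves T) = mset [1..<N+1] \<and>
     label T = {1..N} \<and>
     (\<forall>s\<in>set (subtrees T). s \<noteq> Node []) \<and>
     distinct (map label (subtrees T))"

text \<open>All nodes of the tree, each paired with the rank R_{Pa(nu)} of its parent
  (the root gets parent rank R_{Pa([N])} = 1 when called with p = 1).\<close>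
fun nodes_pr :: "(nat set \<Rightarrow> nat) \<Rightarrow> mtree \<Rightarrow> nat \<Rightarrow> (mtree \<times> nat) set" where
  "nodes_pr R (Leaf n) p = {(Leaf n, p)}"
| "nodes_pr R (Node cs) p =
     insert (Node cs, p) (\<Union>c\<in>set cs. nodes_pr R c (R (label (Node cs))))"

text \<open>A tensor over the modes of nu is represented as a
  function of an index assignment idx (idx n \<in> {1..D n} for n \<in> nu); modes are
  addressed by their label, so the mode permutation pi_nu is implicit.
  W nu r' r is the entry (r', r) of the weight matrix W^{(nu)} (1-based).\<close>
fun tens :: "(nat set \<Rightarrow> nat) \<Rightarrow> (nat set \<Rightarrow> nat \<Rightarrow> nat \<Rightarrow> real) \<Rightarrow> mtree \<Rightarrow> nat \<Rightarrow> (nat \<Rightarrow> nat) \<Rightarrow> real" where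
  "tens R W (Leaf n) r idx = W {n} (idx n) r"
| "tens R W (Node cs) r idx =
     (\<Sum>r'\<in>{1..R (label (Node cs))}. W (label (Node cs)) r' r *
        prod_list (map (\<lambda>c. tens R W c r' idx) cs))"

definition idx_set :: "(nat \<Rightarrow> nat) \<Rightarrow> nat set \<Rightarrow> (nat \<Rightarrow> nat) set" where
  "idx_set D S = PiE S (\<lambda>n. {1..D n})"

text \<open>Frobenius norm of the stacked tensor W^{(nu,:)}, whose last mode has size p = R_{Pa(nu)}.\<close>
definition stack_norm :: "(nat \<Rightarrow> nat) \<Rightarrow> (nat set \<Rightarrow> nat) \<Rightarrow> (nat set \<Rightarrow> nat \<Rightarrow> nat \<Rightarrow> real)
    \<Rightarrow> mtree \<Rightarrow> nat \<Rightarrow> real" where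
  "stack_norm D R W t p =
     sqrt (\<Sum>r\<in>{1..p}. \<Sum>idx\<in>idx_set D (label t). (tens R W t r idx)\<^sup>2)"

definition mat_norm :: "(nat \<Rightarrow> nat \<Rightarrow> real) \<Rightarrow> nat \<Rightarrow> nat \<Rightarrow> real" where
  "mat_norm A m p = sqrt (\<Sum>i\<in>{1..m}. \<Sum>j\<in>{1..p}. (A i j)\<^sup>2)"

end

theory Submission
  imports Defs
begin

lemma label_leaves: "label t = set (leaves t)"
  by (induction t) auto

lemma tens_local:
  "(\<forall>n\<in>label t. idx n = idx' n) \<Longrightarrow> tens R W t r idx = tens R W t r idx'"
proof (induction t arbitrary: r)
  case (Leaf n) then show ?case by simp
next
  case (Node cs)
  have "\<And>r'. map (\<lambda>c. tens R W c r' idx) cs = map (\<lambda>c. tens R W c r' idx') cs"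
    using Node by (auto intro!: map_cong)
  then show ?case by (simp only: tens.simps)
qed

lemma nodes_pr_sub: "(s, q) \<in> nodes_pr R T p \<Longrightarrow> s \<in> set (subtrees T)"
  by (induction T arbitrary: p) auto

lemma distinct_sub: "distinct (leaves T) \<Longrightarrow> s \<in> set (subtrees T) \<Longrightarrow> distinct (leaves s)"
proof (induction T)
  case (Leaf n) then show ?case by simp
next
  case (Node cs)
  then show ?case by (auto simp: distinct_concat_iff)
qed

lemma sum_PiE_split:
  fixes g h :: "(nat \<Rightarrow> nat) \<Rightarrow> real"
  assumes "A \<inter> B = {}" "finite A" "finite B" "\<And>n. finite (E n)"
    and g: "\<And>x y. (\<forall>n\<in>A. x n = y n) \<Longrightarrow> g x = g y"
    and h: "\<And>x y. (\<forall>n\<in>B. x n = y n) \<Longrightarrow> h x = h y"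
  shows "(\<Sum>x\<in>PiE (A \<union> B) E. g x * h x) = (\<Sum>x\<in>PiE A E. g x) * (\<Sum>y\<in>PiE B E. h y)"
proof -
  let ?m = "\<lambda>(x, y). \<lambda>n. if n \<in> A then x n else y n"
  have bij: "bij_betw ?m (PiE A E \<times> PiE B E) (PiE (A \<union> B) E)"
  proof (rule bij_betw_byWitness[where f' = "\<lambda>z. (restrict z A, restrict z B)"])
    show "\<forall>a\<in>PiE A E \<times> PiE B E. (restrict (?m a) A, restrict (?m a) B) = a"
      using assms(1) by (auto simp: PiE_def extensional_def restrict_def fun_eq_iff)
    show "\<forall>a'\<in>PiE (A \<union> B) E. ?m (restrict a' A, restrict a' B) = a'"
      by (auto simp: PiE_def extensional_def restrict_def fun_eq_iff)
    show "?m ` (PiE A E \<times> PiE B E) \<subseteq> PiE (A \<union> B) E"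
      by (auto simp: PiE_def Pi_def extensional_def)
    show "(\<lambda>z. (restrict z A, restrict z B)) ` PiE (A \<union> B) E \<subseteq> PiE A E \<times> PiE B E"
      by auto
  qed
  have "(\<Sum>x\<in>PiE (A \<union> B) E. g x * h x) = (\<Sum>z\<in>PiE A E \<times> PiE B E. g (?m z) * h (?m z))"
    using sum.reindex_bij_betw[OF bij, of "\<lambda>x. g x * h x"] by simp
  also have "\<dots> = (\<Sum>z\<in>PiE A E \<times> PiE B E. g (fst z) * h (snd z))"
  proof (rule sum.cong[OF refl])
    fix z assume z: "z \<in> PiE A E \<times> PiE B E"
    obtain x y where xy: "z = (x, y)" by force
    have "g (?m z) = g x" using xy by (intro g) auto
    moreover have "h (?m z) = h y" using xy z assms(1) by (intro h) auto
    ultimately show "g (?m z) * h (?m z) = g (fst z) * h (snd z)" using xy by simp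
  qed
  also have "\<dots> = (\<Sum>x\<in>PiE A E. g x) * (\<Sum>y\<in>PiE B E. h y)"
    by (simp add: sum_product sum.cartesian_product case_prod_beta)
  finally show ?thesis .
qed

lemma sum_idx_prod:
  fixes f :: "mtree \<Rightarrow> (nat \<Rightarrow> nat) \<Rightarrow> real"
  assumes "distinct (concat (map leaves cs))"
    and "\<forall>c\<in>set cs. \<forall>x y. (\<forall>n\<in>label c. x n = y n) \<longrightarrow> f c x = f c y"
  shows "(\<Sum>x\<in>idx_set D (\<Union>c\<in>set cs. label c). prod_list (map (\<lambda>c. f c x) cs))
       = prod_list (map (\<lambda>c. \<Sum>x\<in>idx_set D (label c). f c x) cs)"
  using assms
proof (induction cs)
  case Nil
  then show ?case by (simp add: idx_set_def)
next
  case (Cons c rest)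
  have disj: "label c \<inter> (\<Union>c\<in>set rest. label c) = {}"
    using Cons.prems(1) by (auto simp: label_leaves)
  have fin: "finite (label c)" "finite (\<Union>c\<in>set rest. label c)"
    by (auto simp: label_leaves)
  have "(\<Sum>x\<in>idx_set D (\<Union>c\<in>set (c # rest). label c). prod_list (map (\<lambda>c. f c x) (c # rest)))
     = (\<Sum>x\<in>PiE (label c \<union> (\<Union>c\<in>set rest. label c)) (\<lambda>n. {1..D n}). f c x * prod_list (map (\<lambda>c. f c x) rest))"
    by (simp add: idx_set_def)
  also have "\<dots> = (\<Sum>x\<in>idx_set D (label c). f c x) * (\<Sum>x\<in>idx_set D (\<Union>c\<in>set rest. label c). prod_list (map (\<lambda>c. f c x) rest))"
    unfolding idx_set_def
  proof (rule sum_PiE_split[OF disj fin])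
    show "\<And>n. finite {1..D n}" by simp
    show "\<And>x y. \<forall>n\<in>label c. x n = y n \<Longrightarrow> f c x = f c y" using Cons.prems(2) by simp
    fix x y :: "nat \<Rightarrow> nat" assume "\<forall>n\<in>(\<Union>c\<in>set rest. label c). x n = y n"
    then have "map (\<lambda>c. f c x) rest = map (\<lambda>c. f c y) rest"
      using Cons.prems(2) by (intro map_cong) auto
    then show "prod_list (map (\<lambda>c. f c x) rest) = prod_list (map (\<lambda>c. f c y) rest)" by (rule arg_cong[where f=prod_list])
  qed
  also have "\<dots> = prod_list (map (\<lambda>c. \<Sum>x\<in>idx_set D (label c). f c x) (c # rest))"
    using Cons by simp
  finally show ?case .
qed

lemma sum_prod_le:
  fixes a :: "mtree \<Rightarrow> nat \<Rightarrow> real"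
  assumes "finite S" "cs \<noteq> []" "\<And>c r. a c r \<ge> 0"
  shows "(\<Sum>r\<in>S. prod_list (map (\<lambda>c. a c r) cs)) \<le> prod_list (map (\<lambda>c. \<Sum>r\<in>S. a c r) cs)"
  using assms(2)
proof (induction cs)
  case Nil then show ?case by simp
next
  case (Cons c rest)
  show ?case
  proof (cases "rest = []")
    case True then show ?thesis by simp
  next
    case False
    let ?Q = "\<lambda>r. prod_list (map (\<lambda>c. a c r) rest)"
    have Qnn: "\<And>r. ?Q r \<ge> 0" by (rule prod_list_nonneg) (auto simp: assms(3))
    have "(\<Sum>r\<in>S. a c r * ?Q r) \<le> (\<Sum>i\<in>S. \<Sum>j\<in>S. a c i * ?Q j)"
    proof (rule sum_mono)
      fix i assume "i \<in> S"
      then show "a c i * ?Q i \<le> (\<Sum>j\<in>S. a c i * ?Q j)"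
        using member_le_sum[of i S "\<lambda>j. a c i * ?Q j"] assms(1,3) Qnn by auto
    qed
    also have "\<dots> = (\<Sum>r\<in>S. a c r) * (\<Sum>r\<in>S. ?Q r)" by (simp add: sum_product)
    also have "\<dots> \<le> (\<Sum>r\<in>S. a c r) * prod_list (map (\<lambda>c. \<Sum>r\<in>S. a c r) rest)"
      using Cons.IH[OF False] by (intro mult_left_mono) (auto intro: sum_nonneg assms(3))
    finally show ?thesis by simp
  qed
qed

lemma prod_list_sqrt: "prod_list (map (\<lambda>c. sqrt (f c)) cs) = sqrt (prod_list (map f cs))"
  by (induction cs) (auto simp: real_sqrt_mult)

lemma prod_list_sq: "(prod_list (map f cs))\<^sup>2 = prod_list (map (\<lambda>c. (f c)\<^sup>2) cs)" for f :: "'a \<Rightarrow> real"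
  by (induction cs) (auto simp: power_mult_distrib)

theorem lemma8:
  fixes N :: nat and D :: "nat \<Rightarrow> nat" and R :: "nat set \<Rightarrow> nat"
    and W :: "nat set \<Rightarrow> nat \<Rightarrow> nat \<Rightarrow> real" and T :: mtree
    and cs :: "mtree list" and p :: nat
  assumes "N \<ge> 1"
    and "mode_tree N T"
    and "\<forall>n\<in>{1..N}. D n \<ge> 1"
    and "\<forall>s\<in>set (subtrees T). (\<exists>xs. s = Node xs) \<longrightarrow> R (label s) \<ge> 1"
    and "(Node cs, p) \<in> nodes_pr R T 1"
  shows "stack_norm D R W (Node cs) p
           \<le> mat_norm (W (label (Node cs))) (R (label (Node cs))) p *
             prod_list (map (\<lambda>c. stack_norm D R W c (R (label (Node cs)))) cs)"
proof -
  define \<nu> where "\<nu> = label (Node cs)"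
  define K where "K = R \<nu>"
  define M where "M = W \<nu>"
  define P where "P = (\<lambda>r' idx. prod_list (map (\<lambda>c. tens R W c r' idx) cs))"
  define I where "I = idx_set D \<nu>"
  have sub: "Node cs \<in> set (subtrees T)" using assms(5) by (rule nodes_pr_sub)
  have "distinct (leaves T)"
    using assms(2) unfolding mode_tree_def by (metis distinct_upt mset_eq_imp_distinct_iff)
  then have dl: "distinct (concat (map leaves cs))" using distinct_sub[OF _ sub] by simp
  have csne: "cs \<noteq> []" using assms(2) sub unfolding mode_tree_def by auto
  have nu: "\<nu> = (\<Union>c\<in>set cs. label c)" by (simp add: \<nu>_def)
  have finI: "finite I" unfolding I_def idx_set_def
    by (intro finite_PiE) (auto simp: \<nu>_def label_leaves)
  define S0 where "S0 = (\<Sum>r\<in>{1..p}. \<Sum>idx\<in>I. (\<Sum>r'\<in>{1..K}. M r' r * P r' idx)\<^sup>2)"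
  have lhs: "stack_norm D R W (Node cs) p = sqrt S0"
    unfolding stack_norm_def S0_def I_def K_def M_def P_def \<nu>_def by simp
  have "S0 \<le> (\<Sum>r\<in>{1..p}. \<Sum>idx\<in>I. (\<Sum>r'\<in>{1..K}. (M r' r)\<^sup>2) * (\<Sum>r'\<in>{1..K}. (P r' idx)\<^sup>2))"
    unfolding S0_def by (intro sum_mono Cauchy_Schwarz_ineq_sum)
  also have "\<dots> = (\<Sum>r\<in>{1..p}. (\<Sum>r'\<in>{1..K}. (M r' r)\<^sup>2) * (\<Sum>idx\<in>I. \<Sum>r'\<in>{1..K}. (P r' idx)\<^sup>2))"
    by (intro sum.cong refl) (rule sum_distrib_left[symmetric])
  also have "\<dots> = (\<Sum>r\<in>{1..p}. \<Sum>r'\<in>{1..K}. (M r' r)\<^sup>2) * (\<Sum>idx\<in>I. \<Sum>r'\<in>{1..K}. (P r' idx)\<^sup>2)"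
    by (rule sum_distrib_right[symmetric])
  also have "(\<Sum>r\<in>{1..p}. \<Sum>r'\<in>{1..K}. (M r' r)\<^sup>2) = (mat_norm M K p)\<^sup>2"
    unfolding mat_norm_def by (subst sum.swap) (simp add: sum_nonneg)
  also have "(\<Sum>idx\<in>I. \<Sum>r'\<in>{1..K}. (P r' idx)\<^sup>2)
      = (\<Sum>r'\<in>{1..K}. prod_list (map (\<lambda>c. \<Sum>x\<in>idx_set D (label c). (tens R W c r' x)\<^sup>2) cs))"
  proof -
    have "(\<Sum>idx\<in>I. \<Sum>r'\<in>{1..K}. (P r' idx)\<^sup>2) = (\<Sum>r'\<in>{1..K}. \<Sum>idx\<in>I. (P r' idx)\<^sup>2)"
      by (rule sum.swap)
    also have "\<dots> = (\<Sum>r'\<in>{1..K}. prod_list (map (\<lambda>c. \<Sum>x\<in>idx_set D (label c). (tens R W c r' x)\<^sup>2) cs))"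
    proof (rule sum.cong[OF refl])
      fix r'
      show "(\<Sum>idx\<in>I. (P r' idx)\<^sup>2) = prod_list (map (\<lambda>c. \<Sum>x\<in>idx_set D (label c). (tens R W c r' x)\<^sup>2) cs)"
        unfolding P_def prod_list_sq I_def nu
        by (rule sum_idx_prod[OF dl, of "\<lambda>c x. (tens R W c r' x)\<^sup>2"])
           (metis tens_local)
    qed
    finally show ?thesis .
  qed
  also have "(\<Sum>r'\<in>{1..K}. prod_list (map (\<lambda>c. \<Sum>x\<in>idx_set D (label c). (tens R W c r' x)\<^sup>2) cs))
      \<le> prod_list (map (\<lambda>c. \<Sum>r'\<in>{1..K}. \<Sum>x\<in>idx_set D (label c). (tens R W c r' x)\<^sup>2) cs)"
    by (rule sum_prod_le[OF _ csne]) (auto intro: sum_nonneg)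
  also have "\<dots> = (prod_list (map (\<lambda>c. stack_norm D R W c K) cs))\<^sup>2"
    unfolding prod_list_sq stack_norm_def by (simp add: sum_nonneg)
  finally have "S0 \<le> (mat_norm M K p)\<^sup>2 * (prod_list (map (\<lambda>c. stack_norm D R W c K) cs))\<^sup>2"
    by (simp add: mult_left_mono)
  then have "sqrt S0 \<le> sqrt ((mat_norm M K p * prod_list (map (\<lambda>c. stack_norm D R W c K) cs))\<^sup>2)"
    by (simp add: power_mult_distrib)
  also have "\<dots> = mat_norm M K p * prod_list (map (\<lambda>c. stack_norm D R W c K) cs)"
    by (intro real_sqrt_abs[THEN trans] abs_of_nonneg mult_nonneg_nonneg prod_list_nonneg)
       (auto simp: mat_norm_def stack_norm_def intro!: sum_nonneg)
  finally show ?thesis using lhs by (simp add: M_def K_def \<nu>_def)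
qed

end
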